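(* For every $d\ge 1$ there is a constant $C_d$ such that for every $\sigma\in(0,1)$ and every finite $\sigma$-exposed set $L$ of closed line segments in $\mathbb{R}^d$, the density of $L$ is at most $C_d\,\sigma^{-2d-2}$.
   Context: For sets $X, Y\subseteq\mathbb{R}^d$ and $\sigma>0$, $X$ $\sigma$-shadows $Y$ if $\max_{q\in Y} \mathrm{dist}(q, X) \le \sigma\cdot \mathrm{diam}(Y)$, where $\mathrm{dist}(q,X)=\min_{p\in X}\|q-p\|$. A set of objects is $\sigma$-exposed if no object in the set $\sigma$-shadows another (distinct) object of the set. The density of a finite set $\mathcal{O}$ of objects in $\mathbb{R}^d$ is the maximum, over all closed balls $B$, of the number of objects $o\in\mathcal{O}$ that intersect $B$ and satisfy $\mathrm{diam}(o)\ge \mathrm{diam}(B)$. *)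

theory Defs
  imports "HOL-Analysis.Analysis"
begin

definition shadows :: "real \<Rightarrow> 'a::metric_space set \<Rightarrow> 'a set \<Rightarrow> bool" where
  "shadows \<sigma> X Y \<longleftrightarrow> (\<forall>q\<in>Y. infdist q X \<le> \<sigma> * diameter Y)"

definition exposed :: "real \<Rightarrow> 'a::metric_space set set \<Rightarrow> bool" where
  "exposed \<sigma> F \<longleftrightarrow> (\<forall>X\<in>F. \<forall>Y\<in>F. X \<noteq> Y \<longrightarrow> \<not> shadows \<sigma> X Y)"

definition density :: "'a::metric_space set set \<Rightarrow> nat" where
  "density F = Sup {card {S\<in>F. S \<inter> cball c r \<noteq> {} \<and> diameter S \<ge> diameter (cball c r)}
                    | c r. r \<ge> 0}"

definition is_segment :: "'a::real_vector set \<Rightarrow> bool" where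
  "is_segment s \<longleftrightarrow> (\<exists>a b. a \<noteq> b \<and> s = closed_segment a b)"

end

theory Submission
  imports Defs "HOL-Library.FuncSet"
begin


lemma diameter_segment:
  fixes a b :: "'a::euclidean_space"
  shows "diameter (closed_segment a b) = dist a b"
proof (rule order_antisym)
  show "diameter (closed_segment a b) \<le> dist a b"
  proof (rule diameter_le)
    show "closed_segment a b \<noteq> {} \<or> 0 \<le> dist a b" by simp
    fix x y assume "x \<in> closed_segment a b" "y \<in> closed_segment a b"
    then obtain s s' where s: "x = (1 - s) *\<^sub>R a + s *\<^sub>R b" "0 \<le> s" "s \<le> 1"
      and s': "y = (1 - s') *\<^sub>R a + s' *\<^sub>R b" "0 \<le> s'" "s' \<le> 1"
      by (auto simp: closed_segment_def)
    have "x - y = (s - s') *\<^sub>R (b - a)" by (simp add: s s' algebra_simps)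
    then have "norm (x - y) = \<bar>s - s'\<bar> * norm (b - a)" by simp
    also have "\<dots> \<le> 1 * norm (b - a)"
      by (rule mult_right_mono) (use s s' in auto)
    finally show "norm (x - y) \<le> dist a b" by (simp add: dist_norm norm_minus_commute)
  qed
  show "dist a b \<le> diameter (closed_segment a b)"
    by (rule diameter_bounded_bound) (auto intro: compact_imp_bounded)
qed

lemma clamp_lemma:
  fixes lo hi x d :: real
  shows "0 \<le> d \<Longrightarrow> lo \<le> hi \<Longrightarrow> lo - d \<le> x \<Longrightarrow> x \<le> hi + d \<Longrightarrow> \<bar>x - max lo (min x hi)\<bar> \<le> d"
  by (auto simp: max_def min_def)

lemma shadow_lemma:
  fixes a b a' b' :: "'a::euclidean_space"
  assumes ab: "a \<noteq> b" and ab': "a' \<noteq> b'"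
    and l: "dist a b \<le> dist a' b'"
    and t: "0 \<le> t" "t \<le> 1" "0 \<le> t'" "t' \<le> 1" "\<bar>t - t'\<bar> \<le> e"
    and u: "norm ((1 / dist a b) *\<^sub>R (b - a) - (1 / dist a' b') *\<^sub>R (b' - a')) \<le> e"
    and q: "norm ((a + t *\<^sub>R (b - a)) - (a' + t' *\<^sub>R (b' - a'))) \<le> e * dist a b"
    and se: "3 * e \<le> \<sigma>"
  shows "\<forall>p\<in>closed_segment a b. infdist p (closed_segment a' b') \<le> \<sigma> * diameter (closed_segment a b)"
proof
  fix p assume "p \<in> closed_segment a b"
  then obtain s where s: "p = (1 - s) *\<^sub>R a + s *\<^sub>R b" "0 \<le> s" "s \<le> 1"
    by (auto simp: closed_segment_def)
  define L where "L = dist a b"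
  define L' where "L' = dist a' b'"
  have lpos: "L > 0" using ab by (simp add: L_def)
  have lpos': "L' > 0" using ab' by (simp add: L'_def)
  have ll: "L \<le> L'" using l by (simp add: L_def L'_def)
  have e0: "e \<ge> 0" using t by linarith
  define u where "u = (1 / L) *\<^sub>R (b - a)"
  define u' where "u' = (1 / L') *\<^sub>R (b' - a')"
  define q where "q = a + t *\<^sub>R (b - a)"
  define q' where "q' = a' + t' *\<^sub>R (b' - a')"
  define lam where "lam = (s - t) * L"
  define mu where "mu = max (- t' * L') (min lam ((1 - t') * L'))"
  define x where "x = a' + (t' + mu / L') *\<^sub>R (b' - a')"
  have nu': "norm u' = 1" using lpos' by (simp add: u'_def L'_def dist_norm norm_minus_commute)
  have p_eq: "p = q + lam *\<^sub>R u"
    using lpos s by (simp add: q_def lam_def u_def algebra_simps)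
  have x_eq: "x = q' + mu *\<^sub>R u'"
    using lpos' by (simp add: q'_def x_def u'_def algebra_simps)
  have mu_lo: "- t' * L' \<le> mu" and mu_hi: "mu \<le> (1 - t') * L'"
    using t lpos' by (auto simp: mu_def algebra_simps)
  have "0 \<le> t' + mu / L'"
  proof -
    have "- t' \<le> mu / L'" using mu_lo lpos' by (simp add: field_simps)
    then show ?thesis by linarith
  qed
  moreover have "t' + mu / L' \<le> 1"
  proof -
    have "mu / L' \<le> 1 - t'" using mu_hi lpos' by (simp add: field_simps)
    then show ?thesis by linarith
  qed
  ultimately have xin: "x \<in> closed_segment a' b'"
    unfolding x_def closed_segment_def
    by (rule_tac CollectI, rule_tac x="t' + mu / L'" in exI) (simp add: algebra_simps)
  have lam_abs: "\<bar>lam\<bar> \<le> L"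
  proof -
    have "\<bar>s - t\<bar> \<le> 1" using s t by auto
    then have "\<bar>s - t\<bar> * L \<le> 1 * L" using lpos by (intro mult_right_mono) auto
    then show ?thesis using lpos by (simp add: lam_def abs_mult)
  qed
  have lam_hi: "lam \<le> (1 - t') * L' + e * L"
  proof -
    have "lam \<le> (1 - t) * L" using s lpos by (simp add: lam_def mult_right_mono)
    also have "\<dots> \<le> (1 - t' + e) * L" using t lpos by (intro mult_right_mono) auto
    also have "\<dots> = (1 - t') * L + e * L" by (simp add: algebra_simps)
    also have "(1 - t') * L \<le> (1 - t') * L'" using t ll by (intro mult_left_mono) auto
    finally show ?thesis by simp
  qed
  have lam_lo: "- t' * L' - e * L \<le> lam"
  proof -
    have "- t * L \<le> lam" using s lpos by (simp add: lam_def algebra_simps)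
    moreover have "- (t' + e) * L \<le> - t * L" using t lpos by (intro mult_right_mono) auto
    moreover have "- t' * L' \<le> - t' * L" using t ll by (simp add: mult_left_mono)
    ultimately show ?thesis by (simp add: algebra_simps)
  qed
  have lm: "\<bar>lam - mu\<bar> \<le> e * L"
  proof -
    have "- t' * L' \<le> (1 - t') * L'" using lpos' by (simp add: algebra_simps)
    then show ?thesis unfolding mu_def using clamp_lemma lam_hi lam_lo e0 lpos by (meson mult_nonneg_nonneg less_imp_le)
  qed
  have peq: "p - x = (q - q') + lam *\<^sub>R (u - u') + (lam - mu) *\<^sub>R u'"
    by (simp add: p_eq x_eq algebra_simps)
  have n1: "norm (p - x) \<le> norm ((q - q') + lam *\<^sub>R (u - u')) + norm ((lam - mu) *\<^sub>R u')"
    unfolding peq by (rule norm_triangle_ineq)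
  have n2: "norm ((q - q') + lam *\<^sub>R (u - u')) \<le> norm (q - q') + norm (lam *\<^sub>R (u - u'))"
    by (rule norm_triangle_ineq)
  have "norm (p - x) \<le> norm (q - q') + norm (lam *\<^sub>R (u - u')) + norm ((lam - mu) *\<^sub>R u')"
    using n1 n2 by linarith
  also have "norm (q - q') \<le> e * L" using q by (simp add: q_def q'_def L_def)
  also have "norm (lam *\<^sub>R (u - u')) \<le> L * e"
  proof -
    have "norm (u - u') \<le> e" using u by (simp add: u_def u'_def L_def L'_def)
    then have "\<bar>lam\<bar> * norm (u - u') \<le> L * e" using lam_abs e0
      by (intro mult_mono) auto
    then show ?thesis by simp
  qed
  also have "norm ((lam - mu) *\<^sub>R u') \<le> e * L" using lm nu' by simp
  finally have "norm (p - x) \<le> 3 * e * L" by (simp add: algebra_simps)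
  also have "\<dots> \<le> \<sigma> * L" using se lpos by (intro mult_right_mono) auto
  finally have "dist p x \<le> \<sigma> * L" by (simp add: dist_norm)
  moreover have "infdist p (closed_segment a' b') \<le> dist p x" by (rule infdist_le[OF xin])
  ultimately show "infdist p (closed_segment a' b') \<le> \<sigma> * diameter (closed_segment a b)"
    by (simp add: diameter_segment L_def)
qed

lemma floor_close:
  fixes x y :: real and M :: nat
  assumes "M > 0" "\<lfloor>x * real M\<rfloor> = \<lfloor>y * real M\<rfloor>"
  shows "\<bar>x - y\<bar> \<le> 1 / real M"
proof -
  have "\<bar>x * real M - y * real M\<bar> < 1"
    using assms(2) floor_correct[of "x * real M"] floor_correct[of "y * real M"] by linarith
  then have "\<bar>x - y\<bar> * real M < 1" by (simp add: left_diff_distrib[symmetric] abs_mult)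
  then show ?thesis using assms(1) by (simp add: field_simps)
qed

lemma floor_bound:
  fixes x :: real and M :: nat
  assumes "\<bar>x\<bar> \<le> 1"
  shows "\<lfloor>x * real M\<rfloor> \<in> {- int M..int M}"
proof -
  have "\<bar>x * real M\<bar> \<le> real M" using assms by (simp add: abs_mult mult_left_le_one_le)
  then have "- real M \<le> x * real M" "x * real M \<le> real M" by linarith+
  then show ?thesis by (auto simp: le_floor_iff floor_le_iff)
qed

lemma vec_close:
  fixes x y :: "real^'n"
  assumes "\<And>i. \<bar>x$i - y$i\<bar> \<le> d"
  shows "norm (x - y) \<le> real CARD('n) * d"
proof -
  have "norm (x - y) \<le> (\<Sum>i\<in>UNIV. \<bar>(x - y)$i\<bar>)" by (rule norm_le_l1_cart)
  also have "\<dots> \<le> (\<Sum>i\<in>(UNIV::'n set). d)" using assms by (intro sum_mono) simp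
  also have "\<dots> = real CARD('n) * d" by simp
  finally show ?thesis .
qed



lemma count_lemma:
  fixes L :: "(real^'n) set set" and A B :: "(real^'n) set \<Rightarrow> real^'n" and M :: nat
  assumes seg: "\<forall>s\<in>L. A s \<noteq> B s \<and> s = closed_segment (A s) (B s)"
    and fin: "finite L" and exp: "exposed \<sigma> L" and sig: "0 < \<sigma>"
    and Mb: "3 * real CARD('n) / \<sigma> \<le> real M" and r0: "0 \<le> r"
  shows "card {S\<in>L. S \<inter> cball c r \<noteq> {} \<and> diameter S \<ge> diameter (cball c r)}
         \<le> card ((Pi\<^sub>E (UNIV::'n set) (\<lambda>_. {- int M..int M})) \<times> {- int M..int M} \<times>
                  (Pi\<^sub>E (UNIV::'n set) (\<lambda>_. {- int M..int M})))"
proof -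
  define S where "S = {S\<in>L. S \<inter> cball c r \<noteq> {} \<and> diameter S \<ge> diameter (cball c r)}"
  define K where "K = (Pi\<^sub>E (UNIV::'n set) (\<lambda>_. {- int M..int M})) \<times> {- int M..int M} \<times>
                  (Pi\<^sub>E (UNIV::'n set) (\<lambda>_. {- int M..int M}))"
  define n where "n = real CARD('n)"
  have n1: "n \<ge> 1" by (simp add: n_def)
  have Mpos: "real M > 0"
  proof -
    have "0 < 3 * n / \<sigma>" using n1 sig by simp
    then show ?thesis using Mb unfolding n_def by linarith
  qed
  have invM: "n / real M \<le> \<sigma> / 3"
    using Mb Mpos sig by (simp add: n_def field_simps)
  have invM1: "1 / real M \<le> \<sigma> / 3"
  proof -
    have "1 / real M \<le> n / real M" using n1 Mpos by (simp add: divide_right_mono)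
    then show ?thesis using invM by linarith
  qed
  have "\<forall>s\<in>S. \<exists>t. 0 \<le> t \<and> t \<le> 1 \<and> dist c (A s + t *\<^sub>R (B s - A s)) \<le> r"
  proof
    fix s assume "s \<in> S"
    then have sL: "s \<in> L" and ne: "s \<inter> cball c r \<noteq> {}" by (auto simp: S_def)
    then obtain p where p: "p \<in> closed_segment (A s) (B s)" "dist c p \<le> r"
      using seg by auto
    then obtain t where "p = (1 - t) *\<^sub>R A s + t *\<^sub>R B s" "0 \<le> t" "t \<le> 1"
      by (auto simp: closed_segment_def)
    moreover have "(1 - t) *\<^sub>R A s + t *\<^sub>R B s = A s + t *\<^sub>R (B s - A s)"
      by (simp add: algebra_simps)
    ultimately show "\<exists>t. 0 \<le> t \<and> t \<le> 1 \<and> dist c (A s + t *\<^sub>R (B s - A s)) \<le> r"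
      using p by auto
  qed
  then obtain T where T: "\<forall>s\<in>S. 0 \<le> T s \<and> T s \<le> 1 \<and> dist c (A s + T s *\<^sub>R (B s - A s)) \<le> r"
    by metis
  define U where "U s = (1 / dist (A s) (B s)) *\<^sub>R (B s - A s)" for s
  define Q where "Q s = A s + T s *\<^sub>R (B s - A s)" for s
  define V where "V s = (1 / r) *\<^sub>R (Q s - c)" for s
  define key where "key s = ((\<lambda>i. \<lfloor>U s $ i * real M\<rfloor>), \<lfloor>T s * real M\<rfloor>, (\<lambda>i. \<lfloor>V s $ i * real M\<rfloor>))" for s
  have QV: "Q s - c = r *\<^sub>R V s" if "s \<in> S" for s
  proof (cases "r = 0")
    case True
    then have "Q s = c" using T that by (simp add: Q_def)
    then show ?thesis by (simp add: V_def)
  next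
    case False
    then show ?thesis by (simp add: V_def)
  qed
  have normU: "norm (U s) = 1" if "s \<in> S" for s
  proof -
    have "A s \<noteq> B s" using that seg by (auto simp: S_def)
    then show ?thesis by (simp add: U_def dist_norm norm_minus_commute)
  qed
  have normV: "norm (V s) \<le> 1" if "s \<in> S" for s
  proof (cases "r = 0")
    case True
    then show ?thesis by (simp add: V_def)
  next
    case False
    have "norm (Q s - c) \<le> r" using T that by (simp add: Q_def dist_norm norm_minus_commute)
    then show ?thesis using False r0 by (simp add: V_def divide_le_eq_1)
  qed
  have diamS: "2 * r \<le> dist (A s) (B s)" if "s \<in> S" for s
  proof -
    have "diameter s \<ge> 2 * r" using that r0 by (simp add: S_def)
    moreover have "s = closed_segment (A s) (B s)" using that seg by (auto simp: S_def)
    ultimately show ?thesis by (metis diameter_segment)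
  qed
  have keyK: "key ` S \<subseteq> K"
  proof
    fix k assume "k \<in> key ` S"
    then obtain s where s: "s \<in> S" "k = key s" by auto
    have "\<lfloor>U s $ i * real M\<rfloor> \<in> {- int M..int M}" for i
      by (rule floor_bound) (metis component_le_norm_cart normU[OF s(1)])
    moreover have "\<lfloor>V s $ i * real M\<rfloor> \<in> {- int M..int M}" for i
      by (rule floor_bound) (metis component_le_norm_cart normV[OF s(1)] order_trans)
    moreover have "\<lfloor>T s * real M\<rfloor> \<in> {- int M..int M}"
      by (rule floor_bound) (use T s in auto)
    ultimately show "k \<in> K" by (simp add: K_def key_def s PiE_UNIV_domain)
  qed
  have main: "X = Y" if XY: "X \<in> S" "Y \<in> S" "key X = key Y" "dist (A Y) (B Y) \<le> dist (A X) (B X)" for X Y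
  proof (rule ccontr)
    assume ne: "X \<noteq> Y"
    have XL: "X \<in> L" and YL: "Y \<in> L" using XY by (auto simp: S_def)
    have eqU: "\<lfloor>U Y $ i * real M\<rfloor> = \<lfloor>U X $ i * real M\<rfloor>" for i
      using XY(3) by (simp add: key_def fun_eq_iff)
    have eqV: "\<lfloor>V Y $ i * real M\<rfloor> = \<lfloor>V X $ i * real M\<rfloor>" for i
      using XY(3) by (simp add: key_def fun_eq_iff)
    have eqT: "\<lfloor>T Y * real M\<rfloor> = \<lfloor>T X * real M\<rfloor>"
      using XY(3) by (simp add: key_def)
    have Mn: "M > 0" using Mpos by simp
    have dU: "norm (U Y - U X) \<le> \<sigma> / 3"
    proof -
      have "norm (U Y - U X) \<le> n * (1 / real M)"
        unfolding n_def by (rule vec_close) (rule floor_close[OF Mn eqU])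
      then show ?thesis using invM by (metis times_divide_eq_right mult.right_neutral order_trans)
    qed
    have dV: "norm (V Y - V X) \<le> \<sigma> / 3"
    proof -
      have "norm (V Y - V X) \<le> n * (1 / real M)"
        unfolding n_def by (rule vec_close) (rule floor_close[OF Mn eqV])
      then show ?thesis using invM by (metis times_divide_eq_right mult.right_neutral order_trans)
    qed
    have dT: "\<bar>T Y - T X\<bar> \<le> \<sigma> / 3" using floor_close[OF Mn eqT] invM1 by linarith
    have "Q Y - Q X = r *\<^sub>R (V Y - V X)"
      using QV[OF XY(1)] QV[OF XY(2)] by (simp add: algebra_simps)
    then have "norm (Q Y - Q X) = r * norm (V Y - V X)" using r0 by simp
    also have "\<dots> \<le> r * (\<sigma> / 3)" using dV r0 by (rule mult_left_mono)
    also have "\<dots> \<le> dist (A Y) (B Y) * (\<sigma> / 3)"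
      using diamS[OF XY(2)] r0 sig by (intro mult_right_mono) auto
    finally have dQ: "norm (Q Y - Q X) \<le> \<sigma> / 3 * dist (A Y) (B Y)" by (simp add: mult.commute)
    have sh: "\<forall>p\<in>closed_segment (A Y) (B Y). infdist p (closed_segment (A X) (B X))
        \<le> \<sigma> * diameter (closed_segment (A Y) (B Y))"
      apply (rule shadow_lemma[where t="T Y" and t'="T X" and e="\<sigma>/3"])
      using seg XL YL XY T dT dU dQ by (auto simp: U_def Q_def)
    have "shadows \<sigma> X Y"
      using sh seg XL YL unfolding shadows_def by metis
    then show False using exp ne XL YL unfolding exposed_def by blast
  qed
  have inj: "inj_on key S"
  proof (rule inj_onI)
    fix X Y assume "X \<in> S" "Y \<in> S" "key X = key Y"
    then show "X = Y"
      using main[of X Y] main[of Y X] by (cases "dist (A Y) (B Y) \<le> dist (A X) (B X)") auto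
  qed
  have finK: "finite K" by (simp add: K_def finite_PiE)
  have "card S = card (key ` S)" using inj by (simp add: card_image)
  also have "\<dots> \<le> card K" using keyK finK by (rule card_mono[rotated])
  finally show ?thesis by (simp add: S_def K_def)
qed



theorem mainTheorem8:
  "\<exists>C::real. \<forall>(\<sigma>::real) (L::(real^'n) set set).
      0 < \<sigma> \<and> \<sigma> < 1 \<and> finite L \<and> (\<forall>s\<in>L. is_segment s) \<and> exposed \<sigma> L
      \<longrightarrow> real (density L) \<le> C * \<sigma> powr (- (2 * real CARD('n) + 2))"
proof (intro exI allI impI)
  fix \<sigma> :: real and L :: "(real^'n) set set"
  assume H: "0 < \<sigma> \<and> \<sigma> < 1 \<and> finite L \<and> (\<forall>s\<in>L. is_segment s) \<and> exposed \<sigma> L"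
  define n where "n = CARD('n)"
  have sig: "0 < \<sigma>" "\<sigma> < 1" using H by auto
  have "\<forall>s\<in>L. \<exists>p. fst p \<noteq> snd p \<and> s = closed_segment (fst p) (snd p)"
    using H by (auto simp: is_segment_def)
  then obtain P where P: "\<forall>s\<in>L. fst (P s) \<noteq> snd (P s) \<and> s = closed_segment (fst (P s)) (snd (P s))"
    by metis
  define M :: nat where "M = nat \<lceil>3 * real n / \<sigma>\<rceil>"
  have Mb: "3 * real CARD('n) / \<sigma> \<le> real M"
    unfolding M_def n_def by linarith
  have Mub: "real M \<le> 3 * real n / \<sigma> + 1"
  proof -
    have "0 \<le> 3 * real n / \<sigma>" using sig by simp
    then show ?thesis unfolding M_def by linarith
  qed
  define I where "I = {- int M..int M}"
  define K where "K = (Pi\<^sub>E (UNIV::'n set) (\<lambda>_. I)) \<times> I \<times> (Pi\<^sub>E (UNIV::'n set) (\<lambda>_. I))"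
  have cardI: "card I = 2 * M + 1" by (simp add: I_def)
  have cardK: "card K = (2 * M + 1) ^ (2 * n + 1)"
  proof -
    have cP: "card (Pi\<^sub>E (UNIV::'n set) (\<lambda>_. I)) = (2 * M + 1) ^ n"
      by (simp add: card_PiE cardI n_def)
    have e: "(2 * M + 1) ^ (2 * n + 1) = (2 * M + 1) ^ n * ((2 * M + 1) * (2 * M + 1) ^ n)"
    proof -
      have "\<And>x::nat. x ^ (2 * n + 1) = x ^ n * (x * x ^ n)"
        by (simp only: mult_2 power_add power_one_right) (simp add: ac_simps)
      then show ?thesis by blast
    qed
    show ?thesis by (simp only: K_def card_cartesian_product cP cardI e)
  qed
  have bnd: "card {S\<in>L. S \<inter> cball c r \<noteq> {} \<and> diameter S \<ge> diameter (cball c r)} \<le> card K"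
    if "r \<ge> 0" for c r
    unfolding K_def I_def
    by (rule count_lemma[where A="\<lambda>s. fst (P s)" and B="\<lambda>s. snd (P s)"]) (use P H Mb that in auto)
  have "density L \<le> card K"
    unfolding density_def by (rule cSup_least) (use bnd in auto)
  then have "real (density L) \<le> real ((2 * M + 1) ^ (2 * n + 1))"
    unfolding cardK by (simp only: of_nat_le_iff)
  also have "\<dots> = real (2 * M + 1) ^ (2 * n + 1)" by (rule of_nat_power)
  also have "\<dots> \<le> (9 * real n / \<sigma>) ^ (2 * n + 1)"
  proof (rule power_mono)
    have n1: "1 \<le> real n" by (simp add: n_def)
    have "1 \<le> real n / \<sigma>" using n1 sig by (simp add: field_simps)
    then show "real (2 * M + 1) \<le> 9 * real n / \<sigma>" using Mub by simp
  qed simp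
  also have "\<dots> = (9 * real n) ^ (2 * n + 1) / \<sigma> ^ (2 * n + 1)"
    by (simp add: power_divide)
  also have "\<dots> \<le> (9 * real n) ^ (2 * n + 1) / \<sigma> ^ (2 * n + 2)"
  proof (rule divide_left_mono)
    show "\<sigma> ^ (2 * n + 2) \<le> \<sigma> ^ (2 * n + 1)"
      using sig by (intro power_decreasing) auto
  qed (use sig in auto)
  also have "\<dots> = (9 * real CARD('n)) ^ (2 * CARD('n) + 1) * \<sigma> powr (- (2 * real CARD('n) + 2))"
  proof -
    have "\<sigma> powr (- (2 * real CARD('n) + 2)) = inverse (\<sigma> powr (real (2 * n + 2)))"
    proof -
      have "- (2 * real CARD('n) + 2) = - real (2 * n + 2)" by (simp add: n_def)
      then show ?thesis by (simp only: powr_minus)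
    qed
    also have "\<dots> = inverse (\<sigma> ^ (2 * n + 2))" using sig by (simp only: powr_realpow)
    finally show ?thesis by (simp add: n_def divide_inverse)
  qed
  finally show "real (density L) \<le> (9 * real CARD('n)) ^ (2 * CARD('n) + 1) * \<sigma> powr (- (2 * real CARD('n) + 2))" .
qed

end
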